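(* Let $a\ge b\ge1$ be integers with either $b\ge2$, or $b=1$ and $a\ge5$, and define $c_j,d_j$ ($j\in\mathbb Z_+$) by $c_0=d_0=0$, $c_1=d_1=1$, $c_{k+2}+c_k=a d_{k+1}$, $d_{k+2}+d_k=b c_{k+1}$. Then for all $k\in\mathbb Z_+$: $$bc_k^2+ad_{k+1}^2-abc_kd_{k+1}-abc_k+2ad_{k+1}+a>0,$$ $$bc_{k+1}^2+ad_k^2-abc_{k+1}d_k+2bc_{k+1}-abd_k+b>0.$$
   Context: $\mathbb Z_+=\{0,1,2,\dots\}$. *)

theory Defs
  imports Main
begin

fun cd_seq :: "int \<Rightarrow> int \<Rightarrow> nat \<Rightarrow> int \<times> int" where
  "cd_seq a b 0 = (0, 0)"
| "cd_seq a b (Suc 0) = (1, 1)"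
| "cd_seq a b (Suc (Suc k)) =
     (a * snd (cd_seq a b (Suc k)) - fst (cd_seq a b k),
      b * fst (cd_seq a b (Suc k)) - snd (cd_seq a b k))"

definition cseq :: "int \<Rightarrow> int \<Rightarrow> nat \<Rightarrow> int" where
  "cseq a b k = fst (cd_seq a b k)"

definition dseq :: "int \<Rightarrow> int \<Rightarrow> nat \<Rightarrow> int" where
  "dseq a b k = snd (cd_seq a b k)"

lemma cseq_dseq_rec:
  "cseq a b 0 = 0" "dseq a b 0 = 0" "cseq a b 1 = 1" "dseq a b 1 = 1"
  "cseq a b (k + 2) + cseq a b k = a * dseq a b (k + 1)"
  "dseq a b (k + 2) + dseq a b k = b * cseq a b (k + 1)"
  by (simp_all add: cseq_def dseq_def)

end

theory Submission
  imports Defs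
begin

lemma c_rec: "cseq a b (Suc (Suc k)) = a * dseq a b (Suc k) - cseq a b k"
  using cseq_dseq_rec(5)[of a b k] by simp

lemma d_rec: "dseq a b (Suc (Suc k)) = b * cseq a b (Suc k) - dseq a b k"
  using cseq_dseq_rec(6)[of a b k] by simp

lemma inv_all:
  fixes a b :: int
  assumes ab: "a * b \<ge> 4" and a: "a \<ge> 1" and b: "b \<ge> 1"
  shows "let c = cseq a b; d = dseq a b in
     c k \<ge> 0 \<and> d k \<ge> 0 \<and> c (Suc k) \<ge> 0 \<and> d (Suc k) \<ge> 0 \<and>
     b * c k \<le> 2 * d (Suc k) \<and> a * d k \<le> 2 * c (Suc k) \<and>
     2 * d k \<le> b * c (Suc k) \<and> 2 * c k \<le> a * d (Suc k) \<and>
     b * (c k)^2 + a * (d (Suc k))^2 - a * b * c k * d (Suc k) > 0 \<and>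
     b * (c (Suc k))^2 + a * (d k)^2 - a * b * c (Suc k) * d k > 0"
proof (induction k)
  case 0
  then show ?case using a b cseq_dseq_rec[of a b] by (simp add: Let_def)
next
  case (Suc k)
  define x where "x = cseq a b k"
  define y where "y = dseq a b k"
  define x1 where "x1 = cseq a b (Suc k)"
  define y1 where "y1 = dseq a b (Suc k)"
  have x2: "cseq a b (Suc (Suc k)) = a * y1 - x" by (simp add: c_rec x_def y1_def)
  have y2: "dseq a b (Suc (Suc k)) = b * x1 - y" by (simp add: d_rec y_def x1_def)
  have IH: "x \<ge> 0" "y \<ge> 0" "x1 \<ge> 0" "y1 \<ge> 0" "b * x \<le> 2 * y1" "a * y \<le> 2 * x1"
     "2 * y \<le> b * x1" "2 * x \<le> a * y1"
     "b * x^2 + a * y1^2 - a * b * x * y1 > 0"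
     "b * x1^2 + a * y^2 - a * b * x1 * y > 0"
    using Suc.IH by (simp_all add: Let_def x_def y_def x1_def y1_def)
  have e1: "b * x \<le> (a*b - 2) * y1"
  proof -
    have "2 * y1 \<le> (a*b - 2) * y1" using mult_right_mono[of 2 "a*b-2" y1] IH(4) ab by linarith
    then show ?thesis using IH(5) by linarith
  qed
  have e2: "a * y \<le> (a*b - 2) * x1"
  proof -
    have "2 * x1 \<le> (a*b - 2) * x1" using mult_right_mono[of 2 "a*b-2" x1] IH(3) ab by linarith
    then show ?thesis using IH(6) by linarith
  qed
  have q1: "b * (a * y1 - x)^2 + a * y1^2 - a * b * (a * y1 - x) * y1
          = b * x^2 + a * y1^2 - a * b * x * y1"
    by (simp add: power2_eq_square algebra_simps)
  have q2: "b * x1^2 + a * (b * x1 - y)^2 - a * b * x1 * (b * x1 - y)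
          = b * x1^2 + a * y^2 - a * b * x1 * y"
    by (simp add: power2_eq_square algebra_simps)
  have n1: "b * x1 \<le> 2 * (b * x1 - y)" using IH(7) by (simp add: right_diff_distrib)
  have n2: "a * y1 \<le> 2 * (a * y1 - x)" using IH(8) by (simp add: right_diff_distrib)
  have n3: "2 * y1 \<le> b * (a * y1 - x)"
  proof -
    have "b * (a * y1 - x) = (a*b - 2) * y1 - b * x + 2 * y1" by (simp add: algebra_simps)
    then show ?thesis using e1 by linarith
  qed
  have n4: "2 * x1 \<le> a * (b * x1 - y)"
  proof -
    have "a * (b * x1 - y) = (a*b - 2) * x1 - a * y + 2 * x1" by (simp add: algebra_simps)
    then show ?thesis using e2 by linarith
  qed
  have p1: "a * y1 - x \<ge> 0" proof -
    have "0 \<le> a*y1" using a IH(4) by simp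
    then show ?thesis using n2 by (simp add: right_diff_distrib)
  qed
  have p2: "b * x1 - y \<ge> 0" proof -
    have "0 \<le> b*x1" using b IH(3) by simp
    then show ?thesis using n1 by (simp add: right_diff_distrib)
  qed
  show ?case
    unfolding Let_def x2 y2 x_def[symmetric] y_def[symmetric]
      x1_def[symmetric] y1_def[symmetric]
    using IH(3,4,9,10) n1 n2 n3 n4 p1 p2 q1 q2 by simp
qed

theorem lemma4p2:
  fixes a b :: int and k :: nat
  assumes "a \<ge> b" and "b \<ge> 1" and "b \<ge> 2 \<or> (b = 1 \<and> a \<ge> 5)"
  shows "(b * (cseq a b k)^2 + a * (dseq a b (k+1))^2 - a * b * cseq a b k * dseq a b (k+1)
           - a * b * cseq a b k + 2 * a * dseq a b (k+1) + a > 0)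
       \<and> (b * (cseq a b (k+1))^2 + a * (dseq a b k)^2 - a * b * cseq a b (k+1) * dseq a b k
           + 2 * b * cseq a b (k+1) - a * b * dseq a b k + b > 0)"
proof -
  have ab: "a * b \<ge> 4"
  proof (cases "b \<ge> 2")
    case True
    then have "a \<ge> 2" using assms by simp
    then show ?thesis using True mult_mono[of 2 a 2 b] by simp
  next
    case False
    then have "b = 1" using assms by simp
    then show ?thesis using assms by simp
  qed
  have a: "a \<ge> 1" using assms by simp
  define x where "x = cseq a b k"
  define y where "y = dseq a b k"
  define x1 where "x1 = cseq a b (Suc k)"
  define y1 where "y1 = dseq a b (Suc k)"
  have I: "b * x \<le> 2 * y1" "a * y \<le> 2 * x1"
     "b * x^2 + a * y1^2 - a * b * x * y1 > 0"
     "b * x1^2 + a * y^2 - a * b * x1 * y > 0"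
    using inv_all[OF ab a assms(2), of k] by (simp_all add: Let_def x_def y_def x1_def y1_def)
  have m1: "a * (b * x) \<le> a * (2 * y1)" using I(1) a by simp
  have m2: "b * (a * y) \<le> b * (2 * x1)" using I(2) assms(2) by simp
  show ?thesis
    unfolding Suc_eq_plus1[symmetric] x_def[symmetric] y_def[symmetric]
      x1_def[symmetric] y1_def[symmetric]
  proof
    have "b * x^2 + a * (y1)^2 - a * b * x * y1 - a * b * x + 2 * a * y1 + a
       = (b * x^2 + a * y1^2 - a * b * x * y1) + (a * (2 * y1) - a * (b * x)) + a"
      by (simp add: algebra_simps)
    then show "b * x^2 + a * (y1)^2 - a * b * x * y1 - a * b * x + 2 * a * y1 + a > 0"
      using I(3) m1 a by linarith
    have "b * x1^2 + a * y^2 - a * b * x1 * y + 2 * b * x1 - a * b * y + b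
       = (b * x1^2 + a * y^2 - a * b * x1 * y) + (b * (2 * x1) - b * (a * y)) + b"
      by (simp add: algebra_simps)
    then show "b * x1^2 + a * y^2 - a * b * x1 * y + 2 * b * x1 - a * b * y + b > 0"
      using I(4) m2 assms(2) by linarith
  qed
qed

end
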